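(* Let $n\ge 2$ and $0\le r_u<1$. For all $x,y\in\mathbb{B}^n$ such that $0\le |x|\le |y|\le r_u$, $$\frac12\,\mathrm{th}\frac{\rho_{\mathbb{B}^n}(x,y)}{2}\le t_{\mathbb{B}^n}(x,y)\le \frac{1+r_u}{2}\,\mathrm{th}\frac{\rho_{\mathbb{B}^n}(x,y)}{2},$$ and the constant $(1+r_u)/2$ in the upper bound is the best possible constant depending only on $r_u$.
   Context: $\mathbb{B}^n=\{x\in\mathbb{R}^n:|x|<1\}$ is the unit ball. For a domain $G\subsetneq\mathbb{R}^n$ and $x\in G$, $d_G(x)=\inf\{|x-z|:z\in\partial G\}$. The hyperbolic metric of the unit ball is given by $\mathrm{sh}^2\frac{\rho_{\mathbb{B}^n}(x,y)}{2}=\frac{|x-y|^2}{(1-|x|^2)(1-|y|^2)}$; equivalently $\mathrm{th}\frac{\rho_{\mathbb{B}^n}(x,y)}{2}=\frac{|x-y|}{\sqrt{|x-y|^2+(1-|x|^2)(1-|y|^2)}}$. The $t$-metric of a domain $G$ is $t_G(x,y)=\frac{|x-y|}{|x-y|+d_G(x)+d_G(y)}$. *)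

theory Defs
  imports "HOL-Analysis.Analysis"
begin

definition dG :: "'a::euclidean_space set \<Rightarrow> 'a \<Rightarrow> real" where
  "dG G x = infdist x (frontier G)"

definition tmetric :: "'a::euclidean_space set \<Rightarrow> 'a \<Rightarrow> 'a \<Rightarrow> real" where
  "tmetric G x y = dist x y / (dist x y + dG G x + dG G y)"

text \<open>Hyperbolic metric of the unit ball: sh^2(rho/2) = |x-y|^2/((1-|x|^2)(1-|y|^2)).\<close>
definition rho_ball :: "'a::euclidean_space \<Rightarrow> 'a \<Rightarrow> real" where
  "rho_ball x y = 2 * arsinh (dist x y / sqrt ((1 - (norm x)\<^sup>2) * (1 - (norm y)\<^sup>2)))"

end

theory Submission
  imports Defs
begin

lemma poly_lower:
  fixes a b d :: real
  assumes a0: "0 \<le> a" and ab: "a \<le> b" and b1: "b \<le> 1" and d1: "b - a \<le> d" and d2: "d \<le> a + b"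
  shows "(d + (2 - a - b))^2 \<le> 4*(d^2 + (1-a^2)*(1-b^2))"
proof -
  define w where "w = a + b - d"
  have w0: "0 \<le> w" and w2: "w \<le> 2*a" using d1 d2 by (auto simp: w_def)
  have d: "d = a + b - w" by (simp add: w_def)
  have g: "4*(d^2 + (1-a^2)*(1-b^2)) - (d + (2 - a - b))^2
      = 8*a*b + 4*a^2*b^2 + 4*w - 8*a*w - 8*b*w + 3*w^2"
    unfolding d by (simp add: algebra_simps power2_eq_square)
  have "0 \<le> 8*a*b + 4*a^2*b^2 + 4*w - 8*a*w - 8*b*w + 3*w^2"
  proof (cases "w \<le> a")
    case True
    have e: "8*a*b + 4*a^2*b^2 + 4*w - 8*a*w - 8*b*w + 3*w^2
      = 8*(b-a)*(a-w) + 4*a^2*(b-a)*(b+a) + 4*w*(1-a)^2 + (2*a^2-w)^2 + 2*(2*a-w)^2"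
      by (simp add: algebra_simps power2_eq_square)
    have "0 \<le> 8*(b-a)*(a-w)" using True ab by simp
    moreover have "0 \<le> 4*a^2*(b-a)*(b+a)" using ab a0 by simp
    moreover have "0 \<le> 4*w*(1-a)^2" using w0 by simp
    ultimately show ?thesis unfolding e by (simp add: add_nonneg_nonneg)
  next
    case False
    define L where "L = (\<lambda>bb. bb*(8*a+8*a^2-8*w)+4*w-4*a^2-8*a*w+3*w^2)"
    have e: "8*a*b + 4*a^2*b^2 + 4*w - 8*a*w - 8*b*w + 3*w^2 = 4*a^2*(b-1)^2 + L b"
      by (simp add: L_def algebra_simps power2_eq_square)
    have L1: "L 1 = (2*a-w)*(4+2*a-3*w)" by (simp add: L_def algebra_simps power2_eq_square)
    have L1p: "0 \<le> L 1" unfolding L1 using w2 w0 a0 ab b1 by (intro mult_nonneg_nonneg) auto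
    have La: "12 * L a = (6*w+4-16*a)^2 - 16*(1-a)^2*(1-6*a)"
      by (simp add: L_def algebra_simps power2_eq_square)
    have Lap: "0 \<le> L a"
    proof (cases "a \<le> 1/6")
      case True
      have "0 \<le> 4 - 16*a" using True by simp
      hence "0 \<le> (8*a+8*a^2-8*w)*a + 4*w-4*a^2-8*a*w+3*w^2"
      proof -
        have "(8*a+8*a^2-8*w)*a + 4*w-4*a^2-8*a*w+3*w^2 = 4*a^2 + 8*a^3 + w*(4-16*a) + 3*w^2"
          by (simp add: algebra_simps power2_eq_square power3_eq_cube)
        moreover have "0 \<le> w*(4-16*a)" using w0 \<open>0 \<le> 4 - 16*a\<close> by simp
        moreover have "0 \<le> 4*a^2 + 8*a^3 + w*(4-16*a) + 3*w^2"
          using a0 \<open>0 \<le> w*(4-16*a)\<close> by (intro add_nonneg_nonneg) auto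
        ultimately show ?thesis by simp
      qed
      thus ?thesis by (simp add: L_def mult.commute)
    next
      case False
      have "0 \<le> 16*(1-a)^2*(6*a-1)" using False by simp
      moreover have "0 \<le> (6*w+4-16*a)^2" by simp
      moreover have "16*(1-a)^2*(1-6*a) = - (16*(1-a)^2*(6*a-1))" by (simp add: algebra_simps)
      ultimately have "0 \<le> 12 * L a" unfolding La by linarith
      thus ?thesis by simp
    qed
    have Lb: "0 \<le> L b"
    proof (cases "0 \<le> 8*a+8*a^2-8*w")
      case True
      have "(8*a+8*a^2-8*w)*a \<le> (8*a+8*a^2-8*w)*b" using ab True by (rule mult_left_mono)
      thus ?thesis using Lap unfolding L_def by (simp only: mult.commute; linarith?)
    next
      case False
      have "(8*a+8*a^2-8*w)*1 \<le> (8*a+8*a^2-8*w)*b" using False b1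
        by (intro mult_left_mono_neg) auto
      thus ?thesis using L1p unfolding L_def by (simp only: mult.commute mult_1_right mult_1_left; linarith?)
    qed
    show ?thesis unfolding e using Lb by simp
  qed
  thus ?thesis using g by simp
qed

lemma poly_upper:
  fixes a b d :: real
  assumes a0: "0 \<le> a" and ab: "a \<le> b" and b1: "b \<le> 1" and d1: "b - a \<le> d" and d2: "d \<le> a + b"
  shows "4*(d^2 + (1-a^2)*(1-b^2)) \<le> (1+b)^2 * (d + (2 - a - b))^2"
proof -
  define w where "w = a + b - d"
  have w0: "0 \<le> w" and w2: "w \<le> 2*a" using d1 d2 by (auto simp: w_def)
  have d: "d = a + b - w" by (simp add: w_def)
  define F where "F = (1+b)^2 * (d + (2 - a - b))^2 - 4*(d^2 + (1-a^2)*(1-b^2))"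
  define F0 where "F0 = 4*((1+b)^2-(1+a*b)^2)"
  define F2 where "F2 = 4*(b-a)*(2+b-a-2*a*b)"
  have e: "2*a*F = F0*(2*a-w) + F2*w + 2*a*(4-(1+b)^2)*w*(2*a-w)"
    unfolding F_def F0_def F2_def d by (simp add: algebra_simps power2_eq_square)
  have "(1+a*b) \<le> 1 + b" using a0 ab b1 by (simp add: mult_left_le_one_le)
  hence "(1+a*b)^2 \<le> (1+b)^2" using a0 ab by (intro power_mono) auto
  hence F0p: "0 \<le> F0" by (simp add: F0_def)
  have "a*b \<le> 1" using a0 ab b1 by (simp add: mult_le_one)
  hence F2p: "0 \<le> F2" unfolding F2_def using ab by (intro mult_nonneg_nonneg) auto
  have "(1+b)^2 \<le> 2^2" using b1 ab a0 by (intro power_mono) auto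
  hence q: "0 \<le> 4-(1+b)^2" by simp
  have "0 \<le> 2*a*F" unfolding e using F0p F2p q w0 w2 a0
    by (intro add_nonneg_nonneg mult_nonneg_nonneg) auto
  show ?thesis
  proof (cases "a = 0")
    case True
    hence "d = b" using d1 d2 by simp
    with True show ?thesis using b1 ab by (simp add: algebra_simps power2_eq_square)
  next
    case False
    hence "0 \<le> F" using \<open>0 \<le> 2*a*F\<close> a0 by (simp add: zero_le_mult_iff)
    thus ?thesis by (simp add: F_def)
  qed
qed

lemma sqrt4: "0 \<le> (X::real) \<Longrightarrow> sqrt (4*X) = 2 * sqrt X"
proof -
  have "sqrt 4 = (2::real)" using real_sqrt_abs[of 2] by simp
  thus ?thesis using real_sqrt_mult[of 4 X] by simp
qed

lemma dG_ball:
  fixes x :: "'a::euclidean_space"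
  assumes "norm x < 1"
  shows "dG (ball 0 1) x = 1 - norm x"
proof -
  have fr: "frontier (ball (0::'a) 1) = sphere 0 1" by simp
  obtain z0 :: 'a where z0: "norm z0 = 1" using vector_choose_size[of 1] by auto
  have ne: "sphere (0::'a) 1 \<noteq> {}" using z0 by auto
  have lo: "1 - norm x \<le> infdist x (sphere 0 1)"
    unfolding infdist_notempty[OF ne]
  proof (rule cINF_greatest[OF ne])
    fix z :: 'a assume "z \<in> sphere 0 1"
    hence "norm z = 1" by simp
    moreover have "norm z - norm x \<le> norm (z - x)" by (rule norm_triangle_ineq2)
    ultimately show "1 - norm x \<le> dist x z" by (simp add: dist_norm norm_minus_commute)
  qed
  have up: "infdist x (sphere 0 1) \<le> 1 - norm x"
  proof (cases "x = 0")
    case True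
    have "infdist x (sphere 0 1) \<le> dist x z0" by (rule infdist_le) (simp add: z0)
    thus ?thesis using True z0 by simp
  next
    case False
    define z where "z = sgn x"
    have nz: "norm z = 1" using False by (simp add: z_def norm_sgn)
    have "x - z = (1 - 1 / norm x) *\<^sub>R x" by (simp add: z_def sgn_div_norm divide_inverse algebra_simps)
    hence "dist x z = \<bar>1 - 1 / norm x\<bar> * norm x" by (simp add: dist_norm)
    also have "\<dots> = (1 / norm x - 1) * norm x"
      using assms False by (simp add: abs_if field_simps)
    also have "\<dots> = 1 - norm x" using False by (simp add: field_simps)
    finally have "dist x z = 1 - norm x" .
    moreover have "infdist x (sphere 0 1) \<le> dist x z" by (rule infdist_le) (simp add: nz)
    ultimately show ?thesis by simp
  qed
  show ?thesis unfolding dG_def fr using lo up by simp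
qed

lemma tmetric_ball:
  fixes x y :: "'a::euclidean_space"
  assumes "norm x < 1" "norm y < 1"
  shows "tmetric (ball 0 1) x y = dist x y / (dist x y + (2 - norm x - norm y))"
  unfolding tmetric_def using dG_ball[OF assms(1)] dG_ball[OF assms(2)] by simp

lemma tanh_arsinh: "tanh (arsinh (u::real)) = u / sqrt (u^2 + 1)"
  by (simp add: tanh_def cosh_arsinh_real)

lemma tanh_rho:
  fixes x y :: "'a::euclidean_space"
  assumes "norm x < 1" "norm y < 1"
  shows "tanh (rho_ball x y / 2) = dist x y / sqrt ((dist x y)^2 + (1 - (norm x)^2) * (1 - (norm y)^2))"
proof -
  define d where "d = dist x y"
  define Q where "Q = (1 - (norm x)^2) * (1 - (norm y)^2)"
  have "(norm x)^2 < 1" using assms(1) norm_ge_zero by (metis abs_norm_cancel abs_square_less_1)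
  moreover have "(norm y)^2 < 1" using assms(2) norm_ge_zero by (metis abs_norm_cancel abs_square_less_1)
  ultimately have Q: "0 < Q" unfolding Q_def by simp
  have "rho_ball x y / 2 = arsinh (d / sqrt Q)" by (simp add: rho_ball_def d_def Q_def)
  hence "tanh (rho_ball x y / 2) = (d / sqrt Q) / sqrt ((d / sqrt Q)^2 + 1)"
    by (simp add: tanh_arsinh)
  also have "(d / sqrt Q)^2 + 1 = (d^2 + Q) / Q" using Q by (simp add: power_divide field_simps)
  also have "sqrt ((d^2 + Q) / Q) = sqrt (d^2 + Q) / sqrt Q" by (simp add: real_sqrt_divide)
  also have "(d / sqrt Q) / (sqrt (d^2 + Q) / sqrt Q) = d / sqrt (d^2 + Q)" using Q by simp
  finally show ?thesis by (simp add: d_def Q_def)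
qed

theorem theorem3p2:
  fixes ru :: real
  assumes n2: "CARD('n::finite) \<ge> 2"
    and ru: "0 \<le> ru" "ru < 1"
  shows "(\<forall>x y :: real^'n. norm x \<le> norm y \<and> norm y \<le> ru \<longrightarrow>
            (1/2) * tanh (rho_ball x y / 2) \<le> tmetric (ball 0 1) x y \<and>
            tmetric (ball 0 1) x y \<le> ((1 + ru) / 2) * tanh (rho_ball x y / 2))
       \<and> (0 < ru \<longrightarrow>
            (\<forall>c. (\<forall>x y :: real^'n. norm x \<le> norm y \<and> norm y \<le> ru \<longrightarrow>
                    tmetric (ball 0 1) x y \<le> c * tanh (rho_ball x y / 2))
                 \<longrightarrow> (1 + ru) / 2 \<le> c))"
proof (intro conjI allI impI)
  fix x y :: "real^'n"
  assume xy: "norm x \<le> norm y \<and> norm y \<le> ru"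
  define a where "a = norm x"
  define b where "b = norm y"
  define d where "d = dist x y"
  define Q where "Q = (1 - a^2) * (1 - b^2)"
  define R where "R = sqrt (d^2 + Q)"
  have a0: "0 \<le> a" and ab: "a \<le> b" and br: "b \<le> ru" using xy by (auto simp: a_def b_def)
  have b1: "b < 1" using br ru by simp
  have x1: "norm x < 1" and y1: "norm y < 1" using a0 ab b1 by (auto simp: a_def b_def)
  have d1: "b - a \<le> d" unfolding a_def b_def d_def dist_norm
    by (metis norm_minus_commute norm_triangle_ineq2)
  have d2: "d \<le> a + b" unfolding a_def b_def d_def dist_norm by (rule norm_triangle_ineq4)
  have d0: "0 \<le> d" by (simp add: d_def)
  have "a^2 < 1" using a0 ab b1 by (simp add: abs_square_less_1)
  moreover have "b^2 < 1" using a0 ab b1 by (simp add: abs_square_less_1)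
  ultimately have Q: "0 < Q" unfolding Q_def by simp
  have R: "0 < R" unfolding R_def using Q d0 by (simp add: add_nonneg_pos)
  have S: "0 < d + (2 - a - b)" using d0 a0 ab b1 by simp
  have T: "tmetric (ball 0 1) x y = d / (d + (2 - a - b))"
    using tmetric_ball[OF x1 y1] by (simp add: a_def b_def d_def)
  have H: "tanh (rho_ball x y / 2) = d / R"
    using tanh_rho[OF x1 y1] by (simp add: a_def b_def d_def Q_def R_def)
  have low: "d + (2 - a - b) \<le> 2 * R"
  proof -
    have "(d + (2 - a - b))^2 \<le> 4*(d^2+Q)"
      using poly_lower[OF a0 ab _ d1 d2] b1 by (simp add: Q_def)
    hence "d + (2 - a - b) \<le> sqrt (4*(d^2+Q))" by (rule real_le_rsqrt)
    also have "sqrt (4*(d^2+Q)) = 2 * R" unfolding R_def using Q by (intro sqrt4) simp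
    finally show ?thesis .
  qed
  have upp: "2 * R \<le> (1 + ru) * (d + (2 - a - b))"
  proof -
    have "4*(d^2+Q) \<le> ((1+b) * (d + (2 - a - b)))^2"
      using poly_upper[OF a0 ab _ d1 d2] b1 by (simp add: Q_def power_mult_distrib)
    hence "sqrt (4*(d^2+Q)) \<le> (1+b) * (d + (2 - a - b))"
      using S a0 ab by (simp add: real_sqrt_le_iff real_le_lsqrt)
    also have "\<dots> \<le> (1 + ru) * (d + (2 - a - b))" using br S by (intro mult_right_mono) auto
    also have "sqrt (4*(d^2+Q)) = 2 * R" unfolding R_def using Q by (intro sqrt4) simp
    finally show ?thesis by simp
  qed
  have "d / (2 * R) \<le> d / (d + (2 - a - b))"
    using low d0 R S by (intro divide_left_mono) auto
  thus "(1/2) * tanh (rho_ball x y / 2) \<le> tmetric (ball 0 1) x y"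
    unfolding T H by simp
  have "((1 + ru) * d) / ((1 + ru) * (d + (2 - a - b))) \<le> ((1 + ru) * d) / (2 * R)"
    using upp d0 R S ru by (intro divide_left_mono) auto
  moreover have "((1 + ru) * d) / ((1 + ru) * (d + (2 - a - b))) = d / (d + (2 - a - b))"
    using ru by simp
  ultimately show "tmetric (ball 0 1) x y \<le> ((1 + ru) / 2) * tanh (rho_ball x y / 2)"
    unfolding T H by simp
next
  fix c :: real
  assume r0: "0 < ru"
  assume hc: "\<forall>x y :: real^'n. norm x \<le> norm y \<and> norm y \<le> ru \<longrightarrow>
                    tmetric (ball 0 1) x y \<le> c * tanh (rho_ball x y / 2)"
  show "(1 + ru) / 2 \<le> c"
  proof (rule ccontr)
    assume nc: "\<not> (1 + ru) / 2 \<le> c"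
    have key: "1 - ru^2 \<le> 2 * c * (1 - s)" if s0: "0 \<le> s" and sr: "s < ru" for s
    proof -
      obtain k :: 'n where True by simp
      define e :: "real^'n" where "e = axis k 1"
      define x where "x = s *\<^sub>R e"
      define y where "y = ru *\<^sub>R e"
      have nx: "norm x = s" using s0 by (simp add: x_def e_def)
      have ny: "norm y = ru" using ru by (simp add: y_def e_def)
      have dxy: "dist x y = ru - s" using sr
        by (simp add: x_def y_def e_def dist_norm flip: scaleR_diff_left)
      have x1: "norm x < 1" and y1: "norm y < 1" using nx ny sr ru by auto
      define d where "d = ru - s"
      define Q where "Q = (1 - s^2) * (1 - ru^2)"
      define R where "R = sqrt (d^2 + Q)"
      have d0: "0 < d" using sr by (simp add: d_def)
      have s2: "s^2 \<le> ru^2" using s0 sr by (intro power_mono) auto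
      have r2: "ru^2 < 1" using ru by (simp add: abs_square_less_1)
      have "(1 - ru^2)*(1-ru^2) \<le> (1-s^2)*(1-ru^2)"
        by (rule mult_right_mono) (use s2 r2 in auto)
      hence Qge: "(1 - ru^2)^2 \<le> Q" unfolding Q_def by (simp only: power2_eq_square[of "1 - ru^2"])
      have "sqrt ((1 - ru^2)^2) \<le> sqrt (d^2 + Q)"
        using Qge zero_le_power2[of d] by (intro real_sqrt_le_mono) linarith
      hence Rge: "1 - ru^2 \<le> R" unfolding R_def using r2 by simp
      have R: "0 < R" using Rge r2 by simp
      have "tmetric (ball 0 1) x y \<le> c * tanh (rho_ball x y / 2)"
        using hc nx ny sr by auto
      hence "d / (2 - 2 * s) \<le> c * (d / R)"
        using tmetric_ball[OF x1 y1] tanh_rho[OF x1 y1] nx ny dxy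
        by (simp add: d_def Q_def R_def algebra_simps)
      hence "d * R \<le> c * d * (2 - 2 * s)" using R d0 sr ru
        by (simp add: field_simps)
      hence "R \<le> c * (2 - 2 * s)" using d0 by (simp add: mult.assoc mult.left_commute[of c])
      thus ?thesis using Rge by (simp add: algebra_simps)
    qed
    have r2: "0 < 1 - ru^2" using ru by (simp add: abs_square_less_1)
    show False
    proof (cases "c \<le> 0")
      case True
      have "1 - ru^2 \<le> 2 * c * (1 - 0)" using key[of 0] r0 by simp
      thus False using True r2 by simp
    next
      case False
      hence c0: "0 < c" by simp
      define K where "K = (1 - ru^2) / (2*c) - (1 - ru)"
      have "2*c*(1-ru) < (1 + ru)*(1-ru)" using nc ru by (intro mult_strict_right_mono) auto
      hence "2*c*(1-ru) < 1 - ru^2" by (simp add: algebra_simps power2_eq_square)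
      hence K0: "0 < K" unfolding K_def using c0 by (simp add: field_simps)
      define \<delta> where "\<delta> = min ru (K/2)"
      have dp: "0 < \<delta>" using r0 K0 by (simp add: \<delta>_def)
      have "1 - ru^2 \<le> 2 * c * (1 - (ru - \<delta>))"
        using key[of "ru - \<delta>"] dp by (simp add: \<delta>_def)
      moreover have "2 * c * (1 - (ru - \<delta>)) < 2 * c * (1 - ru + K)"
        using c0 dp K0 by (simp add: \<delta>_def)
      moreover have "2 * c * (1 - ru + K) = 1 - ru^2" using c0 by (simp add: K_def field_simps)
      ultimately show False by simp
    qed
  qed
qed

end
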